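(* Let $X,Y$ be random variables on finite sets $\mathcal{X},\mathcal{Y}$ with joint pmf $P_{XY}$. Suppose there are $\lambda_{\min}\le\lambda_{\max}$ such that $\lambda_{\min}\le-\log P_{XY}(x,y)\le\lambda_{\max}$ for all $(x,y)$ in the support of $P_{XY}$, and put $\Delta=\lambda_{\max}-\lambda_{\min}$. Let $0\le\epsilon<1$ and $0<\eta<1-\epsilon$, and let $Q_X,Q_Y$ be arbitrary distributions on $\mathcal{X}$ and $\mathcal{Y}$. Then for every real $\gamma$, \[ L_\epsilon(X,Y)\ge\gamma+\log\Big(\Pr\Big(-\log\frac{P_{XY}(X,Y)^2}{Q_X(X)Q_Y(Y)}\ge\gamma\Big)-\epsilon-2\eta\Big)_+-\Delta-4\log\frac1\eta-1. \]
   Context: Logarithms are to base 2, $(a)_+=\max\{a,0\}$, and $\log 0=-\infty$. Setting of the protocol. Party 1 observes $X$ and party 2 observes $Y$. They may use private randomness $U_{\mathcal X}$ and $U_{\mathcal Y}$ and shared randomness $U$; these are mutually independent and independent of $(X,Y)$. Tree protocol. A tree protocol is a binary tree whose internal vertices are labelled 1 or 2. At a vertex labelled $i$, party $i$ sends a bit that is a function of its observation, its private randomness and $U$. The protocol moves to the left or right child according to that bit and stops at a leaf. The transcript $\Pi$ is the sequence of bits sent, and the length of the protocol is the depth of the tree. Data exchange. A protocol attains $\epsilon$-data exchange if there are functions $\hat Y$ of $(X,\Pi,U_{\mathcal X},U)$ and $\hat X$ of $(Y,\Pi,U_{\mathcal Y},U)$ with $\Pr(\hat X=X,\hat Y=Y)\ge1-\epsilon$.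 $L_\epsilon(X,Y)$ is the infimum of the lengths of protocols attaining $\epsilon$-data exchange. *)

theory Defs
  imports "HOL-Probability.Probability"
begin

text \<open>Randomness (private U_X, U_Y and shared U) takes values in nat.
  At a vertex labelled 1 the bit is a function of (x, u_X, u); at a vertex labelled 2
  of (y, u_Y, u).\<close>

datatype ('x, 'y) ptree =
    Leaf
  | Node1 "'x \<Rightarrow> nat \<Rightarrow> nat \<Rightarrow> bool" "('x, 'y) ptree" "('x, 'y) ptree"
  | Node2 "'y \<Rightarrow> nat \<Rightarrow> nat \<Rightarrow> bool" "('x, 'y) ptree" "('x, 'y) ptree"

fun depth :: "('x, 'y) ptree \<Rightarrow> nat" where
  "depth Leaf = 0"
| "depth (Node1 f l r) = Suc (max (depth l) (depth r))"
| "depth (Node2 f l r) = Suc (max (depth l) (depth r))"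

fun transcript :: "('x, 'y) ptree \<Rightarrow> 'x \<Rightarrow> 'y \<Rightarrow> nat \<Rightarrow> nat \<Rightarrow> nat \<Rightarrow> bool list" where
  "transcript Leaf x y ux uy u = []"
| "transcript (Node1 f l r) x y ux uy u =
     (let b = f x ux u in b # transcript (if b then r else l) x y ux uy u)"
| "transcript (Node2 f l r) x y ux uy u =
     (let b = f y uy u in b # transcript (if b then r else l) x y ux uy u)"

text \<open>Probability that both parties decode correctly, with X,Y ~ P and U_X ~ RX, U_Y ~ RY,
  U ~ R mutually independent and independent of (X,Y). dX gives party 1's estimate of Y,
  dY gives party 2's estimate of X.\<close>
definition success_prob ::
  "('x \<times> 'y) pmf \<Rightarrow> nat pmf \<Rightarrow> nat pmf \<Rightarrow> nat pmf \<Rightarrow> ('x, 'y) ptree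
    \<Rightarrow> ('x \<Rightarrow> bool list \<Rightarrow> nat \<Rightarrow> nat \<Rightarrow> 'y) \<Rightarrow> ('y \<Rightarrow> bool list \<Rightarrow> nat \<Rightarrow> nat \<Rightarrow> 'x) \<Rightarrow> real" where
  "success_prob P RX RY R T dX dY =
     measure_pmf.prob
       (bind_pmf P (\<lambda>(x, y). bind_pmf RX (\<lambda>ux. bind_pmf RY (\<lambda>uy. bind_pmf R (\<lambda>u.
          let t = transcript T x y ux uy u in
          return_pmf (dY y t uy u = x \<and> dX x t ux u = y))))))
       {True}"

definition attains_data_exchange :: "('x \<times> 'y) pmf \<Rightarrow> real \<Rightarrow> ('x, 'y) ptree \<Rightarrow> bool" where
  "attains_data_exchange P \<epsilon> T \<longleftrightarrow>
     (\<exists>RX RY R dX dY. success_prob P RX RY R T dX dY \<ge> 1 - \<epsilon>)"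

definition L_eps :: "('x \<times> 'y) pmf \<Rightarrow> real \<Rightarrow> real" where
  "L_eps P \<epsilon> = Inf {real (depth T) | T. attains_data_exchange P \<epsilon> T}"

end

theory Submission
  imports Defs
begin


fun paths :: "('x, 'y) ptree \<Rightarrow> bool list set" where
  "paths Leaf = {[]}"
| "paths (Node1 f l r) = Cons False ` paths l \<union> Cons True ` paths r"
| "paths (Node2 f l r) = Cons False ` paths l \<union> Cons True ` paths r"

lemma paths_finite: "finite (paths T)"
  by (induction T) auto

lemma card_paths: "card (paths T) \<le> 2 ^ depth T"
proof (induction T)
  case Leaf then show ?case by simp
next
  case (Node1 f l r)
  have "card (paths (Node1 f l r)) \<le> card (Cons False ` paths l) + card (Cons True ` paths r)"
    by (simp add: card_Un_le)
  also have "\<dots> \<le> card (paths l) + card (paths r)"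
    by (intro add_mono card_image_le paths_finite)
  also have "\<dots> \<le> 2 ^ depth l + 2 ^ depth r" using Node1 by simp
  also have "\<dots> \<le> 2 ^ max (depth l) (depth r) + 2 ^ max (depth l) (depth r)"
    by (intro add_mono power_increasing) auto
  finally show ?case by simp
next
  case (Node2 f l r)
  have "card (paths (Node2 f l r)) \<le> card (Cons False ` paths l) + card (Cons True ` paths r)"
    by (simp add: card_Un_le)
  also have "\<dots> \<le> card (paths l) + card (paths r)"
    by (intro add_mono card_image_le paths_finite)
  also have "\<dots> \<le> 2 ^ depth l + 2 ^ depth r" using Node2 by simp
  also have "\<dots> \<le> 2 ^ max (depth l) (depth r) + 2 ^ max (depth l) (depth r)"
    by (intro add_mono power_increasing) auto
  finally show ?case by simp
qed

lemma transcript_paths: "transcript T x y ux uy u \<in> paths T"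
  by (induction T) (auto simp: Let_def)

lemma transcript_rect:
  "transcript T x y ux uy u = transcript T x' y' ux uy u \<Longrightarrow>
   transcript T x y' ux uy u = transcript T x y ux uy u"
proof (induction T)
  case Leaf then show ?case by simp
next
  case (Node1 f l r) then show ?case by (auto simp: Let_def split: if_splits)
next
  case (Node2 f l r) then show ?case by (auto simp: Let_def split: if_splits)
qed

lemma prob_bind_le:
  assumes "\<And>x. measure_pmf.prob (f x) A \<le> c" "0 \<le> c"
  shows "measure_pmf.prob (bind_pmf p f) A \<le> c"
proof -
  have "emeasure (measure_pmf (bind_pmf p f)) A = (\<integral>\<^sup>+x. emeasure (f x) A \<partial>p)" by simp
  also have "\<dots> \<le> ennreal c"
    by (intro measure_pmf.nn_integral_le_const) (auto simp: measure_pmf.emeasure_eq_measure assms)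
  finally show ?thesis by (simp add: measure_pmf.emeasure_eq_measure assms(2))
qed



lemma sum_sqrt_cs:
  fixes a b :: "'i \<Rightarrow> real"
  assumes "\<And>i. i \<in> I \<Longrightarrow> 0 \<le> a i" "\<And>i. i \<in> I \<Longrightarrow> 0 \<le> b i"
  shows "(\<Sum>i\<in>I. sqrt (a i) * sqrt (b i)) \<le> sqrt (sum a I) * sqrt (sum b I)"
proof -
  have "(\<Sum>i\<in>I. sqrt (a i) * sqrt (b i))\<^sup>2 \<le> (\<Sum>i\<in>I. (sqrt (a i))\<^sup>2) * (\<Sum>i\<in>I. (sqrt (b i))\<^sup>2)"
    by (rule Cauchy_Schwarz_ineq_sum)
  also have "\<dots> = sum a I * sum b I" using assms by simp
  finally have h: "(\<Sum>i\<in>I. sqrt (a i) * sqrt (b i))\<^sup>2 \<le> sum a I * sum b I" .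
  have "(\<Sum>i\<in>I. sqrt (a i) * sqrt (b i)) \<le> sqrt (sum a I * sum b I)"
    using real_le_rsqrt[OF h] .
  then show ?thesis by (simp add: real_sqrt_mult)
qed

lemma det_bound:
  fixes tr :: "'x::finite \<Rightarrow> 'y::finite \<Rightarrow> 'b"
    and p :: "'x \<times> 'y \<Rightarrow> real" and qx :: "'x \<Rightarrow> real" and qy :: "'y \<Rightarrow> real"
  assumes rect: "\<And>x y x' y'. tr x y = tr x' y' \<Longrightarrow> tr x y' = tr x y"
    and TT: "\<And>x y. tr x y \<in> TT" "finite TT" "card TT \<le> N"
    and qx: "\<And>x. 0 \<le> qx x" "sum qx UNIV = 1"
    and qy: "\<And>y. 0 \<le> qy y" "sum qy UNIV = 1"
    and pG: "\<And>x y. (x, y) \<in> G \<Longrightarrow> p (x, y) \<le> c * (sqrt (qx x) * sqrt (qy y))"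
    and c: "0 \<le> c"
  shows "(\<Sum>z\<in>{(x, y). dY y (tr x y) = x \<and> dX x (tr x y) = y} \<inter> G. p z) \<le> c * sqrt N"
proof -
  define S where "S = {(x, y). dY y (tr x y) = x \<and> dX x (tr x y) = y} \<inter> G"
  define F where "F = (\<lambda>(x, y). sqrt (qx x) * sqrt (qy y))"
  define trp where "trp = (\<lambda>(x,y). tr x y)"
  define Ts where "Ts = trp ` S"
  define A where "A = (\<lambda>t. {x. \<exists>y. tr x y = t})"
  define B where "B = (\<lambda>t. {y. \<exists>x. tr x y = t})"
  define h where "h = (\<lambda>t. sum qx (A t) * sum qy (B t))"
  have "(\<Sum>z\<in>S. p z) \<le> (\<Sum>z\<in>S. c * F z)"
    by (intro sum_mono) (auto simp: S_def F_def intro: pG)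
  also have "\<dots> = c * (\<Sum>z\<in>S. F z)" by (simp add: sum_distrib_left)
  also have "(\<Sum>z\<in>S. F z) = (\<Sum>t\<in>Ts. \<Sum>z\<in>{z\<in>S. trp z = t}. F z)"
    unfolding Ts_def by (rule sum.image_gen) simp
  also have "\<dots> \<le> (\<Sum>t\<in>Ts. sqrt (h t))"
  proof (intro sum_mono)
    fix t assume "t \<in> Ts"
    define M where "M = {z\<in>S. trp z = t}"
    have injf: "inj_on fst M"
    proof (rule inj_onI)
      fix z z' assume "z \<in> M" "z' \<in> M" "fst z = fst z'"
      then show "z = z'" unfolding M_def S_def trp_def
        by (cases z; cases z') (clarsimp; metis)
    qed
    have injs: "inj_on snd M"
    proof (rule inj_onI)
      fix z z' assume "z \<in> M" "z' \<in> M" "snd z = snd z'"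
      then show "z = z'" unfolding M_def S_def trp_def
        by (cases z; cases z') (clarsimp; metis)
    qed
    have e1: "(\<Sum>z\<in>M. F z) = (\<Sum>z\<in>M. sqrt (qx (fst z)) * sqrt (qy (snd z)))"
      by (simp add: F_def case_prod_beta)
    have e2: "(\<Sum>z\<in>M. sqrt (qx (fst z)) * sqrt (qy (snd z)))
        \<le> sqrt (\<Sum>z\<in>M. qx (fst z)) * sqrt (\<Sum>z\<in>M. qy (snd z))"
      by (rule sum_sqrt_cs) (auto simp: qx qy)
    have e3: "(\<Sum>z\<in>M. qx (fst z)) \<le> sum qx (A t)"
    proof -
      have "(\<Sum>z\<in>M. qx (fst z)) = sum qx (fst ` M)"
        by (simp add: sum.reindex[OF injf])
      also have "\<dots> \<le> sum qx (A t)"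
        by (intro sum_mono2) (auto simp: qx M_def A_def trp_def)
      finally show ?thesis .
    qed
    have e4: "(\<Sum>z\<in>M. qy (snd z)) \<le> sum qy (B t)"
    proof -
      have "(\<Sum>z\<in>M. qy (snd z)) = sum qy (snd ` M)"
        by (simp add: sum.reindex[OF injs])
      also have "\<dots> \<le> sum qy (B t)"
        by (intro sum_mono2) (auto simp: qy M_def B_def trp_def)
      finally show ?thesis .
    qed
    have "sqrt (\<Sum>z\<in>M. qx (fst z)) * sqrt (\<Sum>z\<in>M. qy (snd z)) \<le> sqrt (sum qx (A t)) * sqrt (sum qy (B t))"
      using e3 e4 by (intro mult_mono) (auto intro: sum_nonneg simp: qx qy)
    with e1 e2 have "(\<Sum>z\<in>M. F z) \<le> sqrt (sum qx (A t)) * sqrt (sum qy (B t))" by linarith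
    then show "(\<Sum>z\<in>{z\<in>S. trp z = t}. F z) \<le> sqrt (h t)"
      by (simp add: M_def h_def real_sqrt_mult)
  qed
  also have "(\<Sum>t\<in>Ts. sqrt (h t)) = (\<Sum>t\<in>Ts. sqrt 1 * sqrt (h t))" by simp
  also have "\<dots> \<le> sqrt (\<Sum>t\<in>Ts. 1) * sqrt (sum h Ts)"
    by (rule sum_sqrt_cs) (auto simp: h_def qx qy sum_nonneg)
  also have "sum h Ts \<le> 1"
  proof -
    define q where "q = (\<lambda>(x,y). qx x * qy y)"
    have R: "A t \<times> B t = {z. trp z = t}" for t
    proof
      show "A t \<times> B t \<subseteq> {z. trp z = t}"
      proof clarify
        fix x y assume "x \<in> A t" "y \<in> B t"
        then obtain y1 x2 where 1: "tr x y1 = t" and 2: "tr x2 y = t" by (auto simp: A_def B_def)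
        have "tr x y = tr x y1" using rect[of x y1 x2 y] 1 2 by simp
        then show "trp (x, y) = t" using 1 by (simp add: trp_def)
      qed
    next
      show "{z. trp z = t} \<subseteq> A t \<times> B t" by (auto simp: A_def B_def trp_def)
    qed
    have ht: "\<And>t. h t = (\<Sum>z\<in>{z. trp z = t}. q z)"
      unfolding h_def by (simp add: sum_product sum.cartesian_product q_def R[symmetric])
    have Tsub: "Ts \<subseteq> trp ` {z. trp z \<in> Ts}" by (auto simp: Ts_def)
    have "sum h Ts = (\<Sum>t\<in>trp ` {z. trp z \<in> Ts}. \<Sum>z\<in>{z\<in>{z. trp z \<in> Ts}. trp z = t}. q z)"
    proof (rule sum.cong)
      show "Ts = trp ` {z. trp z \<in> Ts}" using Tsub by auto
      fix t assume "t \<in> trp ` {z. trp z \<in> Ts}"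
      then have tT: "t \<in> Ts" by auto
      have eqs: "{z\<in>{z. trp z \<in> Ts}. trp z = t} = {z. trp z = t}" using tT by auto
      show "h t = (\<Sum>z\<in>{z\<in>{z. trp z \<in> Ts}. trp z = t}. q z)" by (simp only: ht eqs)
    qed
    also have "\<dots> = (\<Sum>z\<in>{z. trp z \<in> Ts}. q z)"
      by (rule sum.image_gen[symmetric]) simp
    also have "\<dots> \<le> (\<Sum>z\<in>UNIV. q z)"
      by (intro sum_mono2) (auto simp: q_def qx qy)
    also have "\<dots> = sum qx UNIV * sum qy UNIV"
      by (simp add: q_def sum_product sum.cartesian_product[symmetric] UNIV_Times_UNIV[symmetric]
          del: UNIV_Times_UNIV)
    finally show ?thesis by (simp add: qx qy)
  qed
  then have "sqrt (\<Sum>t\<in>Ts. 1) * sqrt (sum h Ts) \<le> sqrt (\<Sum>t\<in>Ts. 1) * 1"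
    by (intro mult_left_mono) auto
  also have "(\<Sum>t\<in>Ts. (1::real)) \<le> N"
  proof -
    have "card Ts \<le> card TT" using TT by (intro card_mono) (auto simp: Ts_def trp_def)
    then show ?thesis using TT by simp
  qed
  finally show ?thesis
    unfolding S_def[symmetric] using c by (simp add: mult_left_mono)
qed



fun chainX :: "'x list \<Rightarrow> ('x, 'y) ptree \<Rightarrow> ('x, 'y) ptree" where
  "chainX [] t = t"
| "chainX (a # as) t = Node1 (\<lambda>x _ _. x = a) (chainX as t) (chainX as t)"

fun chainY :: "'y list \<Rightarrow> ('x, 'y) ptree \<Rightarrow> ('x, 'y) ptree" where
  "chainY [] t = t"
| "chainY (a # as) t = Node2 (\<lambda>y _ _. y = a) (chainY as t) (chainY as t)"

lemma transcript_chainX: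
  "transcript (chainX as t) x y ux uy u = map (\<lambda>a. x = a) as @ transcript t x y ux uy u"
  by (induction as) (auto simp: Let_def)

lemma transcript_chainY:
  "transcript (chainY as t) x y ux uy u = map (\<lambda>a. y = a) as @ transcript t x y ux uy u"
  by (induction as) (auto simp: Let_def)

lemma map_eq_member:
  assumes "map (\<lambda>a. x' = a) xs = map (\<lambda>a. x = a) xs" "x \<in> set xs"
  shows "x' = x"
proof -
  have "\<forall>a\<in>set xs. (x' = a) = (x = a)" using assms(1) by (simp add: map_eq_conv)
  then show ?thesis using assms(2) by auto
qed

lemma exists_protocol:
  fixes P :: "('x::finite \<times> 'y::finite) pmf"
  shows "\<exists>T. attains_data_exchange P \<epsilon> T \<or> \<epsilon> < 0"
proof (cases "\<epsilon> < 0")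
  case True then show ?thesis by auto
next
  case False
  obtain xs :: "'x list" where xs: "set xs = UNIV" using finite_list[of "UNIV :: 'x set"] by auto
  obtain ys :: "'y list" where ys: "set ys = UNIV" using finite_list[of "UNIV :: 'y set"] by auto
  define T :: "('x, 'y) ptree" where "T = chainX xs (chainY ys Leaf)"
  have tr: "transcript T x y ux uy u = map (\<lambda>a. x = a) xs @ map (\<lambda>a. y = a) ys" for x y ux uy u
    by (simp add: T_def transcript_chainX transcript_chainY)
  define dY :: "'y \<Rightarrow> bool list \<Rightarrow> nat \<Rightarrow> nat \<Rightarrow> 'x" where
    "dY = (\<lambda>y t _ _. SOME x'. map (\<lambda>a. x' = a) xs = take (length xs) t)"
  define dX :: "'x \<Rightarrow> bool list \<Rightarrow> nat \<Rightarrow> nat \<Rightarrow> 'y" where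
    "dX = (\<lambda>x t _ _. SOME y'. map (\<lambda>a. y' = a) ys = drop (length xs) t)"
  have c1: "dY y (transcript T x y ux uy u) uy u = x" for x y ux uy u
  proof -
    have "map (\<lambda>a. (SOME x'. map (\<lambda>a. x' = a) xs = map (\<lambda>a. x = a) xs) = a) xs = map (\<lambda>a. x = a) xs"
      by (rule someI[where x = x]) simp
    then have "(SOME x'. map (\<lambda>a. x' = a) xs = map (\<lambda>a. x = a) xs) = x"
      by (rule map_eq_member) (simp add: xs)
    then show ?thesis by (simp add: dY_def tr)
  qed
  have c2: "dX x (transcript T x y ux uy u) ux u = y" for x y ux uy u
  proof -
    have "map (\<lambda>a. (SOME y'. map (\<lambda>a. y' = a) ys = map (\<lambda>a. y = a) ys) = a) ys = map (\<lambda>a. y = a) ys"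
      by (rule someI[where x = y]) simp
    then have "(SOME y'. map (\<lambda>a. y' = a) ys = map (\<lambda>a. y = a) ys) = y"
      by (rule map_eq_member) (simp add: ys)
    then show ?thesis by (simp add: dX_def tr)
  qed
  have "success_prob P (return_pmf 0) (return_pmf 0) (return_pmf 0) T dX dY = 1"
  proof -
    have k: "(\<lambda>(x::'x, y::'y). return_pmf True) = (\<lambda>_. return_pmf True)" by auto
    show ?thesis unfolding success_prob_def by (simp add: c1 c2 Let_def k)
  qed
  then have "1 - \<epsilon> \<le> success_prob P (return_pmf 0) (return_pmf 0) (return_pmf 0) T dX dY"
    using False by simp
  then have "attains_data_exchange P \<epsilon> T"
    unfolding attains_data_exchange_def by blast
  then show ?thesis by auto
qed

lemma swap_binds:
  "bind_pmf P (\<lambda>(x,y). bind_pmf RX (\<lambda>ux. bind_pmf RY (\<lambda>uy. bind_pmf R (\<lambda>u. h x y ux uy u)))) =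
   bind_pmf RX (\<lambda>ux. bind_pmf RY (\<lambda>uy. bind_pmf R (\<lambda>u. bind_pmf P (\<lambda>z. h (fst z) (snd z) ux uy u))))"
proof -
  have "(\<lambda>(x,y). bind_pmf RX (\<lambda>ux. bind_pmf RY (\<lambda>uy. bind_pmf R (\<lambda>u. h x y ux uy u)))) =
        (\<lambda>z. bind_pmf RX (\<lambda>ux. bind_pmf RY (\<lambda>uy. bind_pmf R (\<lambda>u. h (fst z) (snd z) ux uy u))))"
    by (rule ext) (simp add: split_beta)
  then show ?thesis
    by (simp only: bind_commute_pmf[of P RX] bind_commute_pmf[of P RY] bind_commute_pmf[of P R])
qed


lemma pointwise_bound:
  fixes p qx qy \<gamma> :: real
  assumes "0 < qx" "0 < qy" "0 \<le> p" "\<gamma> \<le> - log 2 (p ^ 2 / (qx * qy))"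
  shows "p \<le> 2 powr (- \<gamma> / 2) * (sqrt qx * sqrt qy)"
proof (cases "p = 0")
  case True then show ?thesis using assms by (simp add: mult_nonneg_nonneg)
next
  case False
  then have pp: "0 < p" using assms by simp
  define v where "v = p ^ 2 / (qx * qy)"
  have v: "0 < v" using pp assms unfolding v_def by (intro divide_pos_pos) auto
  have "log 2 v \<le> - \<gamma>" using assms(4) unfolding v_def by linarith
  then have "2 powr (log 2 v) \<le> 2 powr (- \<gamma>)" by (rule powr_mono) simp
  moreover have "2 powr (log 2 v) = v" using v by simp
  ultimately have "v \<le> 2 powr (- \<gamma>)" by simp
  then have "p ^ 2 \<le> 2 powr (- \<gamma>) * (qx * qy)"
    using assms unfolding v_def by (simp add: divide_le_eq)
  also have "\<dots> = (2 powr (- \<gamma> / 2) * (sqrt qx * sqrt qy)) ^ 2"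
  proof -
    have "(2 powr (- \<gamma> / 2)) ^ 2 = 2 powr (- \<gamma>)"
      by (simp add: power2_eq_square powr_add[symmetric])
    then show ?thesis using assms by (simp add: power_mult_distrib)
  qed
  finally show ?thesis
    by (rule power2_le_imp_le) (use assms in simp)
qed

theorem theorem5:
  fixes P :: "('x::finite \<times> 'y::finite) pmf"
    and QX :: "'x pmf" and QY :: "'y pmf"
    and lam_min lam_max \<epsilon> \<eta> \<gamma> :: real
  assumes "lam_min \<le> lam_max"
    and "\<And>x y. (x, y) \<in> set_pmf P \<Longrightarrow>
            lam_min \<le> - log 2 (pmf P (x, y)) \<and> - log 2 (pmf P (x, y)) \<le> lam_max"
    and "0 \<le> \<epsilon>" and "\<epsilon> < 1"
    and "0 < \<eta>" and "\<eta> < 1 - \<epsilon>"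
  shows "let \<Delta> = lam_max - lam_min;
             p = measure_pmf.prob P {(x, y). pmf QX x > 0 \<and> pmf QY y > 0 \<and>
                   - log 2 (pmf P (x, y) ^ 2 / (pmf QX x * pmf QY y)) \<ge> \<gamma>};
             a = p - \<epsilon> - 2 * \<eta>
         in a > 0 \<longrightarrow>
            L_eps P \<epsilon> \<ge> \<gamma> + log 2 a - \<Delta> - 4 * log 2 (1 / \<eta>) - 1"
proof -
  define G where "G = {(x, y). pmf QX x > 0 \<and> pmf QY y > 0 \<and>
                   - log 2 (pmf P (x, y) ^ 2 / (pmf QX x * pmf QY y)) \<ge> \<gamma>}"
  define pp where "pp = measure_pmf.prob P G"
  define c where "c = (2::real) powr (- \<gamma> / 2)"
  have c0: "0 \<le> c" by (simp add: c_def)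
  have sumP: "sum (pmf P) UNIV = 1" by (rule sum_pmf_eq_1) auto
  have ppsum: "pp = sum (pmf P) G" by (simp add: pp_def measure_measure_pmf_finite)
  have sumQX: "sum (pmf QX) UNIV = 1" by (rule sum_pmf_eq_1) auto
  have sumQY: "sum (pmf QY) UNIV = 1" by (rule sum_pmf_eq_1) auto
  have pp1: "pp \<le> 1" by (simp add: pp_def)
  have depth_bound: "real (depth T) \<ge> \<gamma> + 2 * log 2 (pp - \<epsilon>)"
    if att: "attains_data_exchange P \<epsilon> T" and apos: "pp - \<epsilon> > 0" for T
  proof -
    obtain RX RY R dX dY where s: "1 - \<epsilon> \<le> success_prob P RX RY R T dX dY"
      using att unfolding attains_data_exchange_def by blast
    define l where "l = depth T"
    define K where "K = 1 - pp + c * sqrt (real (2 ^ l))"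
    have K0: "0 \<le> K" using pp1 c0 by (simp add: K_def)
    have inner: "measure_pmf.prob (bind_pmf P (\<lambda>z. let t = transcript T (fst z) (snd z) ux uy u in
          return_pmf (dY (snd z) t uy u = fst z \<and> dX (fst z) t ux u = snd z))) {True} \<le> K"
      for ux uy u
    proof -
      define tr where "tr = (\<lambda>x y. transcript T x y ux uy u)"
      define dY' where "dY' = (\<lambda>y t. dY y t uy u)"
      define dX' where "dX' = (\<lambda>x t. dX x t ux u)"
      define C where "C = {(x, y). dY' y (tr x y) = x \<and> dX' x (tr x y) = y}"
      have eq: "bind_pmf P (\<lambda>z. let t = transcript T (fst z) (snd z) ux uy u in
          return_pmf (dY (snd z) t uy u = fst z \<and> dX (fst z) t ux u = snd z)) =
          map_pmf (\<lambda>z. dY (snd z) (transcript T (fst z) (snd z) ux uy u) uy u = fst z \<and>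
                     dX (fst z) (transcript T (fst z) (snd z) ux uy u) ux u = snd z) P"
        by (simp add: map_pmf_def Let_def)
      have pre: "(\<lambda>z. dY (snd z) (transcript T (fst z) (snd z) ux uy u) uy u = fst z \<and>
                     dX (fst z) (transcript T (fst z) (snd z) ux uy u) ux u = snd z) -` {True} = C"
        unfolding C_def tr_def dY'_def dX'_def by (simp add: vimage_def case_prod_unfold)
      have "measure_pmf.prob (bind_pmf P (\<lambda>z. let t = transcript T (fst z) (snd z) ux uy u in
          return_pmf (dY (snd z) t uy u = fst z \<and> dX (fst z) t ux u = snd z))) {True} = sum (pmf P) C"
        unfolding eq measure_map_pmf pre by (simp add: measure_measure_pmf_finite)
      also have "\<dots> = sum (pmf P) (C \<inter> G) + sum (pmf P) (C - G)"
        by (rule sum.Int_Diff) simp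
      also have "sum (pmf P) (C \<inter> G) \<le> c * sqrt (real (2 ^ l))"
        unfolding C_def
      proof (rule det_bound[where tr=tr and TT="paths T" and N="2^l" and qx="pmf QX" and qy="pmf QY"
            and G=G and p="pmf P" and c=c and dY=dY' and dX=dX'])
        show "\<And>x y x' y'. tr x y = tr x' y' \<Longrightarrow> tr x y' = tr x y"
          unfolding tr_def by (rule transcript_rect)
        show "\<And>x y. tr x y \<in> paths T" unfolding tr_def by (rule transcript_paths)
        show "finite (paths T)" by (rule paths_finite)
        show "card (paths T) \<le> 2 ^ l" unfolding l_def by (rule card_paths)
        show "\<And>x. 0 \<le> pmf QX x" by simp
        show "\<And>x. 0 \<le> pmf QY x" by simp
        show "sum (pmf QX) UNIV = 1" by (rule sumQX)
        show "sum (pmf QY) UNIV = 1" by (rule sumQY)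
        show "0 \<le> c" by (rule c0)
        fix x y assume "(x, y) \<in> G"
        then show "pmf P (x, y) \<le> c * (sqrt (pmf QX x) * sqrt (pmf QY y))"
          unfolding G_def c_def by (intro pointwise_bound) auto
      qed
      also have "sum (pmf P) (C - G) \<le> sum (pmf P) (UNIV - G)"
        by (intro sum_mono2) auto
      also have "sum (pmf P) (UNIV - G) = 1 - pp"
        using sum.Int_Diff[of UNIV "pmf P" G] sumP ppsum by simp
      finally show ?thesis by (simp add: K_def)
    qed
    have "success_prob P RX RY R T dX dY =
      measure_pmf.prob (bind_pmf RX (\<lambda>ux. bind_pmf RY (\<lambda>uy. bind_pmf R (\<lambda>u.
        bind_pmf P (\<lambda>z. let t = transcript T (fst z) (snd z) ux uy u in
          return_pmf (dY (snd z) t uy u = fst z \<and> dX (fst z) t ux u = snd z)))))) {True}"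
      unfolding success_prob_def by (simp only: swap_binds)
    also have "\<dots> \<le> K"
      by (intro prob_bind_le inner K0)
    finally have "1 - \<epsilon> \<le> K" using s by linarith
    then have le: "pp - \<epsilon> \<le> c * sqrt (real (2 ^ l))" by (simp add: K_def)
    have "c * sqrt (real (2 ^ l)) = 2 powr ((real l - \<gamma>) / 2)"
    proof -
      have "sqrt (real (2 ^ l)) = 2 powr (real l / 2)"
        by (simp add: powr_half_sqrt[symmetric] powr_realpow[symmetric] powr_powr)
      then show ?thesis by (simp add: c_def powr_add[symmetric] diff_divide_distrib)
    qed
    with le have "log 2 (pp - \<epsilon>) \<le> log 2 (2 powr ((real l - \<gamma>) / 2))"
      using apos by (intro log_mono) auto
    then have "log 2 (pp - \<epsilon>) \<le> (real l - \<gamma>) / 2" by simp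
    then show ?thesis by (simp add: l_def)
  qed
  have main: "L_eps P \<epsilon> \<ge> \<gamma> + log 2 (pp - \<epsilon> - 2 * \<eta>) - (lam_max - lam_min) - 4 * log 2 (1 / \<eta>) - 1"
    if apos: "pp - \<epsilon> - 2 * \<eta> > 0"
  proof -
    define A where "A = pp - \<epsilon> - 2 * \<eta>"
    have A0: "0 < A" using apos by (simp add: A_def)
    have l1: "log 2 A \<le> log 2 (pp - \<epsilon>)" using A0 assms(5) by (intro log_mono) (auto simp: A_def)
    have l2: "log 2 \<eta> \<le> log 2 (pp - \<epsilon>)" using A0 assms(5) by (intro log_mono) (auto simp: A_def)
    have l3: "log 2 \<eta> < 0" using assms(5,6,3) by simp
    have l4: "log 2 (1 / \<eta>) = - log 2 \<eta>" using assms(5) by (simp add: log_divide)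
    define B where "B = \<gamma> + log 2 A - (lam_max - lam_min) - 4 * log 2 (1 / \<eta>) - 1"
    have BB: "B \<le> \<gamma> + 2 * log 2 (pp - \<epsilon>)"
      using l1 l2 l3 l4 assms(1) by (simp add: B_def)
    have ne: "{real (depth T) |T. attains_data_exchange P \<epsilon> T} \<noteq> {}"
      using exists_protocol[of P \<epsilon>] assms(3) by auto
    have "B \<le> Inf {real (depth T) |T. attains_data_exchange P \<epsilon> T}"
    proof (rule cInf_greatest[OF ne])
      fix r assume "r \<in> {real (depth T) |T. attains_data_exchange P \<epsilon> T}"
      then obtain T where "r = real (depth T)" "attains_data_exchange P \<epsilon> T" by auto
      moreover have "\<epsilon> < pp" using A0 assms(5) by (simp add: A_def)
      ultimately show "B \<le> r" using depth_bound[of T] BB by auto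
    qed
    then show ?thesis by (simp add: L_eps_def B_def A_def)
  qed
  show ?thesis using main unfolding Let_def pp_def G_def by blast
qed

end
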